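(* Let the setting be as in the context. For any function $\Phi:\omega_{h\widehat1}\times\{t_m\}_{m\ge0}\to\mathbb C$ with $\Phi^0=0$ and any $M\ge1$, \[ \mathrm{Im}\sum_{m=1}^M\Bigl(\mathcal S^m_{\rm ref}\mathbf\Phi^m,\ \frac{\Phi^{m-1}+\Phi^m}{2}\Bigr)_{\omega_{h\widehat1}}\tau\ \ge\ 0 . \]
   Context: Let $n\ge2$, $\hbar>0$, $c_\hbar>0$, $V_\infty\in\mathbb R$, $\tau>0$ and $t_m=m\tau$. Let $X_1,\dots,X_n>0$, integers $J_k\ge2$, $h_k=X_k/J_k$; $\omega_{h\widehat1}=\{(j_2h_2,\dots,j_nh_n):1\le j_k\le J_k-1\}$, with inner product $(U,W)_{\omega_{h\widehat1}}=\sum_{j_2=1}^{J_2-1}\cdots\sum_{j_n=1}^{J_n-1}U_{j_2,\dots,j_n}W^*_{j_2,\dots,j_n}h_2\cdots h_n$. Discrete sine transform in $x_k$ ($k\ge2$): $(\mathcal F_kP)^{(q)}=\frac2{J_k}\sum_{j=1}^{J_k-1}P_j\sin\frac{\pi qj}{J_k}$, $(\mathcal F_k^{-1}P^{(\cdot)})_j=\sum_{q=1}^{J_k-1}P^{(q)}\sin\frac{\pi qj}{J_k}$; $\lambda^{(k)}_q=\bigl(\frac2{h_k}\sin\frac{\pi qh_k}{2X_k}\bigr)^2$, $\sigma^{(k)}_q=1-\frac13\sin^2\frac{\pi qh_k}{2X_k}$. Discrete convolution $(R*Q)^m=\sum_{p=0}^mR^pQ^{m-p}$. With $\mathbf\Phi^m=\{\Phi^0,\dots,\Phi^m\}$,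 $\Phi^{\mathbf q}=(\mathcal F_n\cdots(\mathcal F_2\Phi)^{(q_2)}\cdots)^{(q_n)}$ for $\mathbf q=(q_2,\dots,q_n)$, $1\le q_k\le J_k-1$, define $\mathcal S^m_{\rm ref}\mathbf\Phi^m=\mathcal F_2^{-1}\cdots\mathcal F_n^{-1}\bigl[\sigma^{(2)}_{q_2}\cdots\sigma^{(n)}_{q_n}(R_{\mathbf q}*\Phi^{\mathbf q})^m\bigr]$, where $R_{\mathbf q}=R[V_{\infty,\mathbf q}]$ with $V_{\infty,\mathbf q}=V_\infty+c_\hbar\sum_{k=2}^n\lambda^{(k)}_{q_k}/\sigma^{(k)}_{q_k}$. For real $W_\infty$, $R[W_\infty]=(R^m)_{m\ge0}$ is given by $R^0=c_1$, $R^1=-c_1\varkappa\mu$, $R^m=\frac{2m-3}{m}\varkappa\mu R^{m-1}-\frac{m-3}{m}\varkappa^2R^{m-2}$ for $m\ge2$, where $a=\frac{W_\infty}{2c_\hbar}+i\frac{\hbar}{\tau c_\hbar}$, $\alpha=2a+\frac23h_1^2a^2\ (\ne0)$, $\arg\alpha\in(0,2\pi)$, $\beta=2\,\mathrm{Re}\,a+\frac23h_1^2|a|^2$, $c_1=-\frac{|\alpha|^{1/2}}2e^{-i(\arg\alpha)/2}$, $\varkappa=-e^{i\arg\alpha}$, $\mu=\beta/|\alpha|\in(-1,1)$. *)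

theory Defs
  imports Complex_Main "HOL-Library.FuncSet"
begin

(* Index vectors q = (q_2,...,q_n) are functions nat => nat; only coordinates 2..n matter.
   Grid functions are (nat => nat) => complex. *)

definition grid :: "nat \<Rightarrow> (nat \<Rightarrow> nat) \<Rightarrow> (nat \<Rightarrow> nat) set" where
  "grid n J = PiE {2..n} (\<lambda>k. {1..<J k})"

definition dst :: "(nat \<Rightarrow> nat) \<Rightarrow> nat \<Rightarrow> ((nat \<Rightarrow> nat) \<Rightarrow> complex) \<Rightarrow> ((nat \<Rightarrow> nat) \<Rightarrow> complex)" where
  "dst J k P = (\<lambda>q. complex_of_real (2 / real (J k)) *
      (\<Sum>j\<in>{1..<J k}. P (q(k := j)) * complex_of_real (sin (pi * real (q k) * real j / real (J k)))))"

definition idst :: "(nat \<Rightarrow> nat) \<Rightarrow> nat \<Rightarrow> ((nat \<Rightarrow> nat) \<Rightarrow> complex) \<Rightarrow> ((nat \<Rightarrow> nat) \<Rightarrow> complex)" where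
  "idst J k P = (\<lambda>j.
      (\<Sum>q\<in>{1..<J k}. P (j(k := q)) * complex_of_real (sin (pi * real q * real (j k) / real (J k)))))"

definition dst_all :: "nat \<Rightarrow> (nat \<Rightarrow> nat) \<Rightarrow> ((nat \<Rightarrow> nat) \<Rightarrow> complex) \<Rightarrow> ((nat \<Rightarrow> nat) \<Rightarrow> complex)" where
  "dst_all n J P = foldl (\<lambda>Q k. dst J k Q) P [2..<Suc n]"

definition idst_all :: "nat \<Rightarrow> (nat \<Rightarrow> nat) \<Rightarrow> ((nat \<Rightarrow> nat) \<Rightarrow> complex) \<Rightarrow> ((nat \<Rightarrow> nat) \<Rightarrow> complex)" where
  "idst_all n J P = foldr (\<lambda>k Q. idst J k Q) [2..<Suc n] P"

definition arg02 :: "complex \<Rightarrow> real" where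
  "arg02 z = (if Arg z > 0 then Arg z else Arg z + 2 * pi)"

definition Rcoef_a :: "real \<Rightarrow> real \<Rightarrow> real \<Rightarrow> real \<Rightarrow> complex" where
  "Rcoef_a hbar ch tau W = complex_of_real (W / (2 * ch)) + \<i> * complex_of_real (hbar / (tau * ch))"

definition Rcoef_alpha :: "real \<Rightarrow> real \<Rightarrow> real \<Rightarrow> real \<Rightarrow> real \<Rightarrow> complex" where
  "Rcoef_alpha hbar ch tau h1 W =
     (let a = Rcoef_a hbar ch tau W in 2 * a + complex_of_real (2/3 * h1^2) * a^2)"

definition Rcoef_beta :: "real \<Rightarrow> real \<Rightarrow> real \<Rightarrow> real \<Rightarrow> real \<Rightarrow> real" where
  "Rcoef_beta hbar ch tau h1 W =
     (let a = Rcoef_a hbar ch tau W in 2 * Re a + 2/3 * h1^2 * (cmod a)^2)"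

definition Rcoef_c1 :: "real \<Rightarrow> real \<Rightarrow> real \<Rightarrow> real \<Rightarrow> real \<Rightarrow> complex" where
  "Rcoef_c1 hbar ch tau h1 W =
     (let \<alpha> = Rcoef_alpha hbar ch tau h1 W in
       - complex_of_real (sqrt (cmod \<alpha>) / 2) * exp (- \<i> * complex_of_real (arg02 \<alpha> / 2)))"

definition Rcoef_kappa :: "real \<Rightarrow> real \<Rightarrow> real \<Rightarrow> real \<Rightarrow> real \<Rightarrow> complex" where
  "Rcoef_kappa hbar ch tau h1 W = - exp (\<i> * complex_of_real (arg02 (Rcoef_alpha hbar ch tau h1 W)))"

definition Rcoef_mu :: "real \<Rightarrow> real \<Rightarrow> real \<Rightarrow> real \<Rightarrow> real \<Rightarrow> real" where
  "Rcoef_mu hbar ch tau h1 W = Rcoef_beta hbar ch tau h1 W / cmod (Rcoef_alpha hbar ch tau h1 W)"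

fun Rseq :: "real \<Rightarrow> real \<Rightarrow> real \<Rightarrow> real \<Rightarrow> real \<Rightarrow> nat \<Rightarrow> complex" where
  "Rseq hbar ch tau h1 W 0 = Rcoef_c1 hbar ch tau h1 W"
| "Rseq hbar ch tau h1 W (Suc 0) =
     - Rcoef_c1 hbar ch tau h1 W * Rcoef_kappa hbar ch tau h1 W * complex_of_real (Rcoef_mu hbar ch tau h1 W)"
| "Rseq hbar ch tau h1 W (Suc (Suc m)) =
     complex_of_real ((2 * real (Suc (Suc m)) - 3) / real (Suc (Suc m)))
       * Rcoef_kappa hbar ch tau h1 W * complex_of_real (Rcoef_mu hbar ch tau h1 W)
       * Rseq hbar ch tau h1 W (Suc m)
     - complex_of_real ((real (Suc (Suc m)) - 3) / real (Suc (Suc m)))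
       * (Rcoef_kappa hbar ch tau h1 W)^2 * Rseq hbar ch tau h1 W m"

definition lam :: "(nat \<Rightarrow> real) \<Rightarrow> (nat \<Rightarrow> nat) \<Rightarrow> nat \<Rightarrow> nat \<Rightarrow> real" where
  "lam X J k q = (let h = X k / real (J k) in (2 / h * sin (pi * real q * h / (2 * X k)))^2)"

definition sig :: "(nat \<Rightarrow> real) \<Rightarrow> (nat \<Rightarrow> nat) \<Rightarrow> nat \<Rightarrow> nat \<Rightarrow> real" where
  "sig X J k q = (let h = X k / real (J k) in 1 - 1/3 * (sin (pi * real q * h / (2 * X k)))^2)"

definition Vq :: "nat \<Rightarrow> real \<Rightarrow> real \<Rightarrow> (nat \<Rightarrow> real) \<Rightarrow> (nat \<Rightarrow> nat) \<Rightarrow> (nat \<Rightarrow> nat) \<Rightarrow> real" where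
  "Vq n V ch X J q = V + ch * (\<Sum>k=2..n. lam X J k (q k) / sig X J k (q k))"

(* S^m_ref applied to Phi^0..Phi^m; Phi m is the grid function at time t_m *)
definition Sref :: "nat \<Rightarrow> real \<Rightarrow> real \<Rightarrow> real \<Rightarrow> real \<Rightarrow> (nat \<Rightarrow> real) \<Rightarrow> (nat \<Rightarrow> nat)
    \<Rightarrow> (nat \<Rightarrow> (nat \<Rightarrow> nat) \<Rightarrow> complex) \<Rightarrow> nat \<Rightarrow> ((nat \<Rightarrow> nat) \<Rightarrow> complex)" where
  "Sref n hbar ch V tau X J Phi m =
     idst_all n J (\<lambda>q. complex_of_real (\<Prod>k=2..n. sig X J k (q k)) *
        (\<Sum>p=0..m. Rseq hbar ch tau (X 1 / real (J 1)) (Vq n V ch X J q) p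
                     * dst_all n J (Phi (m - p)) q))"

definition inner_grid :: "nat \<Rightarrow> (nat \<Rightarrow> real) \<Rightarrow> (nat \<Rightarrow> nat) \<Rightarrow> ((nat \<Rightarrow> nat) \<Rightarrow> complex)
    \<Rightarrow> ((nat \<Rightarrow> nat) \<Rightarrow> complex) \<Rightarrow> complex" where
  "inner_grid n X J U W = (\<Sum>j\<in>grid n J. U j * cnj (W j)
       * complex_of_real (\<Prod>k=2..n. X k / real (J k)))"

end

theory Submission
  imports Defs "HOL-Complex_Analysis.Complex_Analysis"
begin

no_notation vec_nth (infixl \<open>$\<close> 90)


lemma fps_rec:
  fixes F :: "complex fps" and hb ch tau h1 W :: real
  defines "c1 \<equiv> Rcoef_c1 hb ch tau h1 W" and "k \<equiv> Rcoef_kappa hb ch tau h1 W"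
    and "mu \<equiv> Rcoef_mu hb ch tau h1 W"
  assumes FF: "F * F = fps_const (c1^2) * (1 - fps_const (2*k * of_real mu) * fps_X + fps_const (k^2) * fps_X^2)"
    and F0: "F $ 0 = c1" and c1: "c1 \<noteq> 0"
  shows "F $ n = Rseq hb ch tau h1 W n"
proof -
  define q1 where "q1 = - 2*k * of_real mu"
  define q2 where "q2 = k^2"
  define Q where "Q = 1 + fps_const q1 * fps_X + fps_const q2 * (fps_X::complex fps)^2"
  have FF': "F * F = fps_const (c1^2) * Q" using FF unfolding Q_def q1_def q2_def
    by (simp add: fps_const_neg[symmetric] del: fps_const_neg)
  have dQ: "fps_deriv Q = fps_const q1 + fps_const (2*q2) * fps_X"
    unfolding Q_def by (simp add: fps_deriv_power fps_const_mult[symmetric] del: fps_const_mult)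
  have Qn: "(Q * G) $ n = G$n + q1 * (if n = 0 then 0 else G$(n-1)) + q2 * (if n < 2 then 0 else G$(n-2))" for G n
    unfolding Q_def by (simp add: distrib_right fps_X_power_mult_nth mult.assoc fps_X_mult_nth)
  have dQn: "(fps_deriv Q * G) $ n = q1 * G$n + 2 * q2 * (if n = 0 then 0 else G$(n-1))" for G n
    unfolding dQ by (simp add: distrib_right mult.assoc fps_X_mult_nth)
  have "fps_deriv (F*F) = fps_const (c1^2) * fps_deriv Q" using FF' by simp
  hence "F * (fps_deriv (F*F)) = F * (fps_const (c1^2) * fps_deriv Q)" by simp
  hence "2 * (F * F) * fps_deriv F = fps_const (c1^2) * (fps_deriv Q * F)"
    by (simp add: fps_deriv_mult algebra_simps)
  hence "fps_const (c1^2) * (Q * (2 * fps_deriv F)) = fps_const (c1^2) * (fps_deriv Q * F)"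
    unfolding FF' by (simp add: algebra_simps)
  hence E: "Q * (2 * fps_deriv F) = fps_deriv Q * F"
    using c1 by simp
  have coef0: "2 * F$1 = q1 * F$0"
  proof -
    have "(Q * (2 * fps_deriv F)) $ 0 = (fps_deriv Q * F) $ 0" using E by simp
    thus ?thesis unfolding Qn dQn by simp
  qed
  have coef: "2 * (of_nat (j+2) * F$(j+2)) + q1 * (2 * (of_nat (j+1) * F$(j+1))) + q2 * (2 * (of_nat j * F$j))
     = q1 * F$(j+1) + 2*q2 * F$j" for j
  proof -
    have "(Q * (2 * fps_deriv F)) $ (j+1) = (fps_deriv Q * F) $ (j+1)" using E by simp
    moreover have D: "(2 * fps_deriv F) $ n = 2 * (of_nat (n+1) * F$(n+1))" for n
      by (simp add: fps_deriv_def)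
    ultimately show ?thesis unfolding Qn dQn D by (cases j) (simp_all add: algebra_simps)
  qed
  show ?thesis
  proof (induction n rule: less_induct)
    case (less n)
    show ?case
    proof (cases n)
      case 0 thus ?thesis using F0 by (simp add: c1_def)
    next
      case (Suc n1)
      show ?thesis
      proof (cases n1)
        case 0
        thus ?thesis using coef0 F0 Suc by (simp add: c1_def k_def mu_def q1_def)
      next
        case (Suc j)
        have IH1: "F$(j+1) = Rseq hb ch tau h1 W (Suc j)" using less \<open>n = Suc n1\<close> Suc by simp
        have IH0: "F$j = Rseq hb ch tau h1 W j" using less \<open>n = Suc n1\<close> Suc by simp
        have cj: "2 * (of_nat (j+2) * F$(j+2)) = 
            2 * (k * of_real mu * of_nat (2*j+1) * F$(j+1) - k^2 * (of_real (real j - 1)) * F$j)"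
          using coef[of j] unfolding q1_def q2_def
          by (simp add: algebra_simps of_nat_diff)
        have "F$(j+2) = of_real ((2 * real (j+2) - 3) / real (j+2)) * k * of_real mu * F$(j+1)
              - of_real ((real (j+2) - 3) / real (j+2)) * k^2 * F$j"
        proof -
          define RR where "RR = k * of_real mu * of_nat (2*j+1) * F$(j+1) - k^2 * (of_real (real j - 1)) * F$j"
          have e: "of_nat (j+2) * F$(j+2) = RR"
            using cj unfolding RR_def by (metis mult_cancel_left zero_neq_numeral)
          have nz: "(of_nat (j+2) :: complex) \<noteq> 0" by (metis add_eq_0_iff_both_eq_0 of_nat_eq_0_iff zero_neq_numeral)
          have "F$(j+2) = RR / of_nat (j+2)" using e nz by (simp add: eq_divide_eq mult.commute)
          also have "\<dots> = of_real ((2 * real (j+2) - 3) / real (j+2)) * k * of_real mu * F$(j+1)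
              - of_real ((real (j+2) - 3) / real (j+2)) * k^2 * F$j"
          proof -
            have a1: "of_real ((2 * real (j+2) - 3) / real (j+2)) = (of_nat (2*j+1) / of_nat (j+2) :: complex)"
            proof -
              have "(2 * real (j+2) - 3) = real (2*j+1)" by simp
              thus ?thesis by (simp only: of_real_divide of_real_of_nat_eq)
            qed
            have a2: "of_real ((real (j+2) - 3) / real (j+2)) = (of_real (real j - 1) / of_nat (j+2) :: complex)"
            proof -
              have "(real (j+2) - 3) = real j - 1" by simp
              thus ?thesis by (simp only: of_real_divide of_real_of_nat_eq)
            qed
            show ?thesis unfolding a1 a2 RR_def by (simp add: diff_divide_distrib[symmetric] mult.commute mult.left_commute)
          qed
          finally show ?thesis .
        qed
        thus ?thesis using IH1 IH0 \<open>n = Suc n1\<close> Suc by (simp add: k_def mu_def eval_nat_numeral)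
      qed
    qed
  qed
qed


lemma exp_i_Arg: "z \<noteq> 0 \<Longrightarrow> exp (\<i> * of_real (Arg z)) = z / of_real (cmod z)"
proof -
  assume z: "z \<noteq> 0"
  have "exp (\<i> * of_real (Arg z)) = cis (Arg z)" by (simp add: cis_conv_exp)
  also have "\<dots> = sgn z" using cis_Arg[OF z] .
  also have "\<dots> = z / of_real (cmod z)" by (simp add: sgn_div_norm scaleR_conv_of_real divide_inverse mult.commute)
  finally show ?thesis .
qed

lemma coef_facts:
  fixes hb ch tau h1 W :: real
  assumes hb: "hb > 0" and ch: "ch > 0" and tau: "tau > 0" and h1: "h1 > 0"
  assumes a_def: "a = Rcoef_a hb ch tau W" and al_def: "al = Rcoef_alpha hb ch tau h1 W"
    and be_def: "be = Rcoef_beta hb ch tau h1 W" and c1_def: "c1 = Rcoef_c1 hb ch tau h1 W"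
    and k_def: "k = Rcoef_kappa hb ch tau h1 W" and mu_def: "mu = Rcoef_mu hb ch tau h1 W"
    and cc_def: "cc = 2/3 * h1^2"
  shows "Im a > 0" "al = 2*a + of_real cc * a^2" "be = 2 * Re a + cc * (cmod a)^2"
    "al \<noteq> 0" "\<bar>mu\<bar> \<le> 1" "c1^2 = cnj al / 4" "c1^2 * k^2 = al / 4"
    "c1^2 * (2 * k * of_real mu) = - of_real be / 2" "cmod k = 1" "Im c1 \<ge> 0" "c1 \<noteq> 0" "cc > 0"
proof -
  show ia: "Im a > 0" unfolding a_def Rcoef_a_def using hb ch tau by simp
  show al: "al = 2*a + of_real cc * a^2" unfolding al_def Rcoef_alpha_def Let_def a_def cc_def by simp
  show be: "be = 2 * Re a + cc * (cmod a)^2" unfolding be_def Rcoef_beta_def Let_def a_def cc_def by simp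
  show cc: "cc > 0" unfolding cc_def using h1 by simp
  have alf: "al = a * (2 + of_real cc * a)" unfolding al by (simp add: algebra_simps power2_eq_square)
  have "a \<noteq> 0" using ia by auto
  moreover have "2 + of_real cc * a \<noteq> 0"
  proof
    assume "2 + of_real cc * a = 0"
    hence "Im (2 + of_real cc * a) = 0" by simp
    thus False using cc ia by simp
  qed
  ultimately show aln: "al \<noteq> 0" unfolding alf by simp
  have "be = Re (cnj a * (2 + of_real cc * a))"
    unfolding be cmod_power2 by (simp add: algebra_simps power2_eq_square)
  moreover have "cmod (cnj a * (2 + of_real cc * a)) = cmod al"
    unfolding alf by (simp add: norm_mult)
  ultimately have "\<bar>be\<bar> \<le> cmod al" using abs_Re_le_cmod by metis
  thus "\<bar>mu\<bar> \<le> 1" unfolding mu_def Rcoef_mu_def be_def[symmetric] al_def[symmetric]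
    using aln by (simp add: divide_le_eq)
  define A where "A = arg02 al"
  have eA: "exp (\<i> * of_real A) = al / of_real (cmod al)"
  proof -
    have "exp (\<i> * of_real (Arg al + 2*pi)) = exp (\<i> * of_real (Arg al))"
      by (simp add: algebra_simps exp_add)
    thus ?thesis unfolding A_def arg02_def using exp_i_Arg[OF aln] by auto
  qed
  have A_bnd: "0 \<le> A \<and> A \<le> 2*pi" unfolding A_def arg02_def using Arg_bounded[of al] by auto
  have c1e: "c1 = - of_real (sqrt (cmod al) / 2) * exp (- \<i> * of_real (A / 2))"
    unfolding c1_def Rcoef_c1_def Let_def al_def A_def by simp
  have ke: "k = - (al / of_real (cmod al))"
    unfolding k_def Rcoef_kappa_def al_def[symmetric] A_def[symmetric] eA by simp
  have ncal: "cmod al > 0" using aln by simp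
  have ealcnj: "al * cnj al = of_real ((cmod al)^2)" by (metis complex_norm_square)
  have E2: "exp (- \<i> * of_real (A / 2)) ^ 2 = cnj al / of_real (cmod al)"
  proof -
    have "exp (- \<i> * of_real (A / 2)) ^ 2 = exp (- \<i> * of_real A)"
      by (simp add: power2_eq_square exp_add[symmetric])
    also have "\<dots> = cnj (exp (\<i> * of_real A))" by (simp add: exp_cnj)
    also have "\<dots> = cnj al / of_real (cmod al)" unfolding eA by simp
    finally show ?thesis .
  qed
  have s2: "(of_real (sqrt (cmod al)) / 2 :: complex) ^ 2 = of_real (cmod al) / 4"
    by (simp add: power_divide of_real_power[symmetric] del: of_real_power)
  have nz: "(of_real (cmod al) :: complex) \<noteq> 0" using ncal by simp
  show c1sq: "c1^2 = cnj al / 4"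
    unfolding c1e power_mult_distrib E2 using nz by (simp add: s2)
  show "c1^2 * k^2 = al / 4"
  proof -
    have "c1^2 * k^2 = (al * cnj al) * al / (4 * of_real (cmod al)^2)"
      unfolding c1sq ke using nz by (simp add: field_simps power2_eq_square)
    also have "\<dots> = al / 4" unfolding ealcnj using nz by (simp add: field_simps)
    finally show ?thesis .
  qed
  have mue: "mu = be / cmod al" unfolding mu_def Rcoef_mu_def be_def al_def ..
  show "c1^2 * (2 * k * of_real mu) = - of_real be / 2"
  proof -
    have "c1^2 * (2 * k * of_real mu) = - (al * cnj al) * of_real be / (2 * of_real (cmod al)^2)"
      unfolding c1sq ke mue using nz by (simp add: field_simps power2_eq_square)
    also have "\<dots> = - of_real be / 2" unfolding ealcnj using nz by (simp add: field_simps)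
    finally show ?thesis .
  qed
  show "cmod k = 1" unfolding ke using ncal by (simp add: norm_divide)
  have "Im c1 = sqrt (cmod al) / 2 * sin (A / 2)"
    unfolding c1e by (simp add: Im_exp)
  moreover have "sin (A/2) \<ge> 0" using A_bnd by (intro sin_ge_zero) auto
  ultimately show "Im c1 \<ge> 0" by (metis divide_nonneg_nonneg mult_nonneg_nonneg real_sqrt_ge_zero norm_ge_zero zero_le_numeral)
  show "c1 \<noteq> 0" unfolding c1e using ncal by simp
qed


lemma Im_pos_aux:
  fixes a :: complex and cc :: real and G :: "complex \<Rightarrow> complex"
  assumes ia: "Im a > 0" and cc: "cc > 0" and holo: "G holomorphic_on ball 0 1"
    and G2: "\<And>z. 4 * G z ^ 2 = (2*cnj a + of_real cc * cnj a^2) + 2*(a + cnj a + of_real cc * a * cnj a) * z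
             + (2*a + of_real cc * a^2) * z^2"
    and G0: "Im (G 0) \<ge> 0"
  shows "\<And>z. z \<in> ball 0 1 \<Longrightarrow> Im (G z / (1+z)) > 0"
proof -
  have nz1': "1 + z \<noteq> 0" if "cmod z < 1" for z :: complex
  proof
    assume "1 + z = 0" hence "z = -1" by (simp add: add_eq_0_iff)
    thus False using that by simp
  qed
  have nz1: "1 + z \<noteq> 0" if "z \<in> ball 0 1" for z :: complex
    using nz1' that by simp
  have nonreal: "Im (G z / (1+z)) \<noteq> 0" if z: "z \<in> ball 0 1" for z
  proof
    assume im0: "Im (G z / (1+z)) = 0"
    define N where "N = cnj a + a * z"
    define b where "b = N / (1+z)"
    have rz: "Re z ^ 2 + Im z ^ 2 < 1"
    proof -
      have "cmod z < 1" using z by simp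
      hence "cmod z ^ 2 < 1" by (simp add: power_less_one_iff abs_less_iff)
      thus ?thesis by (simp add: cmod_power2)
    qed
    have num: "Im N * Re (1+z) - Re N * Im (1+z) = - Im a * (1 - (Re z ^ 2 + Im z ^ 2))"
      unfolding N_def by (simp add: algebra_simps power2_eq_square)
    have den: "(Re (1+z))^2 + (Im (1+z))^2 > 0"
      using nz1[OF z] by (simp add: complex_eq_iff sum_power2_gt_zero_iff)
    have "Im b = (Im N * Re (1+z) - Re N * Im (1+z)) / ((Re (1+z))^2 + (Im (1+z))^2)"
      unfolding b_def by (simp add: Im_divide power2_eq_square)
    moreover have "Im N * Re (1+z) - Re N * Im (1+z) < 0" unfolding num using ia rz
      by (simp add: mult_pos_pos)
    ultimately have imb: "Im b < 0" using den by (simp add: divide_neg_pos)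
    define H where "H = G z / (1+z)"
    have "4 * G z ^ 2 = 2 * (1+z) * N + of_real cc * N^2"
      unfolding G2 N_def by (simp add: algebra_simps power2_eq_square)
    moreover have "4 * H^2 = (4 * G z^2) / (1+z)^2" by (simp add: H_def power_divide)
    moreover have "2 * b + of_real cc * b^2 = (2 * (1+z) * N + of_real cc * N^2) / (1+z)^2"
    proof -
      have c: "((1+z) * (2*N)) / ((1+z) * (1+z)) = (2*N)/(1+z)"
        using nz1[OF z] by (rule nonzero_mult_divide_mult_cancel_left)
      have "2 * b = (2*N)/(1+z)" by (simp add: b_def)
      also have "\<dots> = ((1+z) * (2*N)) / ((1+z) * (1+z))" by (rule c[symmetric])
      also have "\<dots> = 2 * (1+z) * N / (1+z)^2" by (simp only: power2_eq_square mult_ac)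
      finally have "2 * b = 2 * (1+z) * N / (1+z)^2" .
      moreover have "b^2 = N^2 / (1+z)^2" unfolding b_def by (simp add: power_divide)
      ultimately show ?thesis by (simp add: add_divide_distrib)
    qed
    ultimately have key: "4 * H^2 = 2 * b + of_real cc * b^2" by simp
    define t where "t = Re H"
    have Ht: "H = of_real t" using im0 unfolding t_def H_def by (simp add: complex_eq_iff)
    have e1: "4 * t^2 = 2 * Re b + cc * (Re b ^ 2 - Im b ^ 2)"
      using arg_cong[OF key, of Re] unfolding Ht by (simp add: power2_eq_square)
    have e2: "2 * Im b + cc * (2 * (Im b * Re b)) = 0"
      using arg_cong[OF key, of Im] unfolding Ht by (simp add: power2_eq_square)
    have "Im b * (2 + 2 * cc * Re b) = 0" using e2 by (simp add: algebra_simps)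
    hence ccx: "cc * Re b = -1" using imb by simp
    have "Re b < 0"
    proof (rule ccontr)
      assume "\<not> Re b < 0" hence "Re b \<ge> 0" by simp
      hence "cc * Re b \<ge> 0" using cc by simp
      thus False using ccx by simp
    qed
    moreover have "4 * t^2 = Re b - cc * Im b ^ 2"
    proof -
      have "cc * Re b ^ 2 = - Re b" using ccx by (simp add: power2_eq_square mult.assoc[symmetric])
      thus ?thesis using e1 by (simp add: algebra_simps)
    qed
    moreover have "cc * Im b ^ 2 \<ge> 0" using cc by simp
    moreover have "4 * t^2 \<ge> 0" by simp
    ultimately show False by linarith
  qed
  have holoH: "(\<lambda>z. G z / (1+z)) holomorphic_on ball 0 1"
    using nz1' holo by (intro holomorphic_intros) auto
  have cont: "continuous_on (ball 0 1) (\<lambda>z. Im (G z / (1+z)))"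
    by (intro continuous_intros holomorphic_on_imp_continuous_on[OF holoH])
  have f0: "Im (G 0 / (1+0)) > 0" using G0 nonreal[of 0] by force
  show "Im (G z / (1+z)) > 0" if z: "z \<in> ball 0 1" for z
  proof (rule ccontr)
    assume "\<not> Im (G z / (1+z)) > 0"
    hence le: "Im (G z / (1+z)) \<le> 0" by simp
    have conn: "connected ((\<lambda>z. Im (G z / (1+z))) ` ball 0 1)"
      by (rule connected_continuous_image[OF cont connected_ball])
    have "0 \<in> (\<lambda>z. Im (G z / (1+z))) ` ball 0 1"
    proof (rule connectedD_interval[OF conn, of "Im (G z/(1+z))" "Im (G 0/(1+0))" 0])
      show "Im (G z/(1+z)) \<in> (\<lambda>z. Im (G z / (1+z))) ` ball 0 1" using z by blast
      show "Im (G 0/(1+0)) \<in> (\<lambda>z. Im (G z / (1+z))) ` ball 0 1" by (rule imageI) simp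
    qed (use f0 le in auto)
    then obtain w where "w \<in> ball 0 1" "Im (G w / (1+w)) = 0" by auto
    thus False using nonreal by blast
  qed
qed


lemma rad_inf_mult: "fps_conv_radius f = \<infinity> \<Longrightarrow> fps_conv_radius g = \<infinity> \<Longrightarrow> fps_conv_radius (f*g :: complex fps) = \<infinity>"
  using fps_conv_radius_mult[of f g] by simp
lemma rad_inf_add: "fps_conv_radius f = \<infinity> \<Longrightarrow> fps_conv_radius g = \<infinity> \<Longrightarrow> fps_conv_radius (f+g :: complex fps) = \<infinity>"
  using fps_conv_radius_add[of f g] by simp
lemma rad_inf_diff: "fps_conv_radius f = \<infinity> \<Longrightarrow> fps_conv_radius g = \<infinity> \<Longrightarrow> fps_conv_radius (f-g :: complex fps) = \<infinity>"
  using fps_conv_radius_diff[of f g] by simp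

lemma quad_rad: "fps_conv_radius (fps_const c * (1 - fps_const a * fps_X + fps_const b * fps_X^2) :: complex fps) = \<infinity>"
  by (intro rad_inf_mult rad_inf_add rad_inf_diff) auto

lemma quad_eval: "eval_fps (fps_const c * (1 - fps_const a * fps_X + fps_const b * fps_X^2) :: complex fps) z
   = c * (1 - a*z + b*z^2)"
proof -
  have r: "fps_conv_radius (fps_const a * fps_X :: complex fps) = \<infinity>" "fps_conv_radius (fps_const b * fps_X^2 :: complex fps) = \<infinity>"
     "fps_conv_radius (1 - fps_const a * fps_X :: complex fps) = \<infinity>"
     "fps_conv_radius (1 - fps_const a * fps_X + fps_const b * fps_X^2 :: complex fps) = \<infinity>"
    by (intro rad_inf_mult rad_inf_add rad_inf_diff; simp)+
  show ?thesis
    by (simp add: eval_fps_mult eval_fps_add eval_fps_diff r)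
qed

lemma R_analytic:
  fixes hb ch tau h1 W :: real
  assumes hb: "hb > 0" and ch: "ch > 0" and tau: "tau > 0" and h1: "h1 > 0"
  obtains G where "G holomorphic_on ball 0 1"
    "\<And>d. (deriv ^^ d) G 0 / fact d = Rseq hb ch tau h1 W d"
    "\<And>z. z \<in> ball 0 1 \<Longrightarrow> Im (G z / (1 + z)) > 0"
proof -
  define a where "a = Rcoef_a hb ch tau W"
  define al where "al = Rcoef_alpha hb ch tau h1 W"
  define be where "be = Rcoef_beta hb ch tau h1 W"
  define c1 where "c1 = Rcoef_c1 hb ch tau h1 W"
  define k where "k = Rcoef_kappa hb ch tau h1 W"
  define mu where "mu = Rcoef_mu hb ch tau h1 W"
  define cc where "cc = 2/3 * h1^2"
  note cf = coef_facts[OF hb ch tau h1 a_def al_def be_def c1_def k_def mu_def cc_def]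
  define th where "th = arccos mu"
  have cth: "cos th = mu" unfolding th_def using cf(5) by (intro cos_arccos) auto
  define u where "u = k * exp (\<i> * of_real th)"
  define v where "v = k * exp (- \<i> * of_real th)"
  have uv: "u * v = k^2" unfolding u_def v_def by (simp add: power2_eq_square algebra_simps exp_add[symmetric])
  have upv: "u + v = 2 * k * of_real mu"
  proof -
    have "u + v = k * (exp (\<i> * of_real th) + exp (- \<i> * of_real th))"
      unfolding u_def v_def by (simp add: distrib_left)
    also have "exp (\<i> * of_real th) + exp (- \<i> * of_real th) = 2 * cos (of_real th)"
      by (simp add: cos_exp_eq)
    also have "cos (of_real th) = of_real mu" using cth by (simp add: cos_of_real)
    finally show ?thesis by simp
  qed
  have nu: "cmod u = 1" "cmod v = 1" unfolding u_def v_def using cf(9) by (simp_all add: norm_mult)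
  have fac: "(1 - u * z) * (1 - v * z) = 1 - 2 * k * of_real mu * z + k^2 * z^2" for z
  proof -
    have "(1 - u * z) * (1 - v * z) = 1 - (u+v)*z + (u * v)*z^2" by (simp add: algebra_simps power2_eq_square)
    thus ?thesis unfolding uv upv .
  qed
  have notin: "1 - w * z \<notin> \<real>\<^sub>\<le>\<^sub>0" if "cmod w = 1" "z \<in> ball 0 1" for w z
  proof
    assume "1 - w * z \<in> \<real>\<^sub>\<le>\<^sub>0"
    hence "Re (1 - w * z) \<le> 0" by (simp add: complex_nonpos_Reals_iff)
    moreover have "Re (w * z) \<le> cmod (w * z)" by (rule complex_Re_le_cmod)
    moreover have "cmod (w * z) < 1" using that by (simp add: norm_mult)
    ultimately show False by simp
  qed
  define G where "G z = c1 * csqrt (1 - u * z) * csqrt (1 - v * z)" for z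
  have holo: "G holomorphic_on ball 0 1"
    unfolding G_def using notin nu by (intro holomorphic_intros) auto
  have Gsq: "G z ^ 2 = c1^2 * (1 - 2 * k * of_real mu * z + k^2 * z^2)" for z
    unfolding G_def fac[symmetric] by (simp add: power_mult_distrib)
  define F where "F = fps_expansion G 0"
  have holo': "G holomorphic_on eball 0 1" using holo by (simp add: one_ereal_def)
  have radF: "fps_conv_radius F \<ge> 1" unfolding F_def using conv_radius_fps_expansion[OF holo'] .
  have evF: "eval_fps F z = G z" if "norm z < 1" for z
    unfolding F_def using eval_fps_expansion'[OF holo', of z] that by (simp add: one_ereal_def)
  have FF: "F * F = fps_const (c1^2) * (1 - fps_const (2 * k * of_real mu) * fps_X + fps_const (k^2) * fps_X^2)"
  proof (rule eval_fps_eqD)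
    show "fps_conv_radius (F * F) > 0"
    proof -
      have "1 \<le> fps_conv_radius (F*F)"
        using order.trans[OF radF fps_conv_radius_mult[of F F, unfolded min.idem]] .
      thus ?thesis using less_le_trans[of "0::ereal" 1 "fps_conv_radius (F*F)"] by simp
    qed
    show "fps_conv_radius (fps_const (c1^2) * (1 - fps_const (2 * k * of_real mu) * fps_X + fps_const (k^2) * fps_X^2)) > 0"
      by (simp add: quad_rad)
    have "eventually (\<lambda>z. z \<in> ball 0 1) (nhds (0::complex))" by (intro eventually_nhds_in_open) auto
    thus "eventually (\<lambda>z. eval_fps (F * F) z = eval_fps (fps_const (c1^2) * (1 - fps_const (2 * k * of_real mu) * fps_X + fps_const (k^2) * fps_X^2)) z) (nhds 0)"
    proof eventually_elim
      case (elim z)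
      have "ereal (norm z) < 1" using elim by (simp add: one_ereal_def)
      hence nz: "ereal (norm z) < fps_conv_radius F" using radF by (rule less_le_trans)
      have "eval_fps (F*F) z = G z ^ 2" using eval_fps_mult[OF nz nz] evF elim by (simp add: power2_eq_square)
      thus ?case unfolding quad_eval Gsq by (simp add: algebra_simps)
    qed
  qed
  have F0: "F $ 0 = c1" unfolding F_def fps_expansion_def by (simp add: G_def)
  have Fn: "F $ n = Rseq hb ch tau h1 W n" for n
    using fps_rec[of F hb ch tau h1 W n] FF F0 cf(11) unfolding c1_def k_def mu_def by simp
  show ?thesis
  proof (rule that[OF holo])
    show "(deriv ^^ d) G 0 / fact d = Rseq hb ch tau h1 W d" for d
      using Fn[of d] unfolding F_def fps_expansion_def by simp
    have alc: "cnj (2*a + of_real cc * a^2) = 2*cnj a + of_real cc * cnj a^2" by simp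
    have bec: "of_real be = a + cnj a + of_real cc * a * cnj a"
    proof -
      have "a + cnj a = of_real (2 * Re a)" by (rule complex_add_cnj)
      moreover have "a * cnj a = of_real ((cmod a)^2)" by (metis complex_norm_square)
      ultimately show ?thesis unfolding cf(3) by (simp add: mult.assoc)
    qed
    have G2: "4 * G z ^ 2 = (2*cnj a + of_real cc * cnj a^2) + 2*(a + cnj a + of_real cc * a * cnj a) * z
             + (2*a + of_real cc * a^2) * z^2" for z
    proof -
      have "4 * G z ^ 2 = 4 * c1^2 - 4 * (c1^2 * (2 * k * of_real mu)) * z + 4 * (c1^2 * k^2) * z^2"
        unfolding Gsq by (simp add: algebra_simps)
      also have "\<dots> = cnj al + 2 * of_real be * z + al * z^2" unfolding cf(7) cf(8) by (simp add: cf(6))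
      finally show ?thesis unfolding bec cf(2) alc .
    qed
    have G0: "Im (G 0) \<ge> 0" using cf(10) by (simp add: G_def)
    show "Im (G z / (1 + z)) > 0" if "z \<in> ball 0 1" for z
      by (rule Im_pos_aux[OF cf(1) cf(12) holo G2 G0 that])
  qed
qed


lemma coef_integral:
  fixes K :: "complex \<Rightarrow> complex" and r :: real
  assumes holo: "K holomorphic_on ball 0 1" and r: "0 < r" "r < 1"
  shows "((\<lambda>w. K w * w^a / w^(Suc m)) has_contour_integral
           (2 * pi * \<i> * (if a \<le> m then fps_expansion K 0 $ (m - a) else 0))) (circlepath 0 r)"
proof (cases "a \<le> m")
  case True
  have sub: "cball 0 r \<subseteq> ball (0::complex) 1" using r by auto
  have cont: "continuous_on (cball 0 r) K"
    using holomorphic_on_imp_continuous_on[OF holomorphic_on_subset[OF holo sub]] .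
  have holo2: "K holomorphic_on ball 0 r" using holomorphic_on_subset[OF holo] r by (simp add: subset_ball)
  have "((\<lambda>u. K u / (u - 0) ^ Suc (m - a)) has_contour_integral
         ((2 * pi * \<i>) / fact (m-a) * (deriv ^^ (m-a)) K 0)) (circlepath 0 r)"
    by (rule Cauchy_has_contour_integral_higher_derivative_circlepath[OF cont holo2]) (use r in simp)
  hence "((\<lambda>u. K u / u ^ Suc (m - a)) has_contour_integral
         (2 * pi * \<i> * (if a \<le> m then fps_expansion K 0 $ (m - a) else 0))) (circlepath 0 r)"
    using True by (simp add: fps_expansion_def)
  thus ?thesis
  proof (rule has_contour_integral_eq)
    fix x assume "x \<in> path_image (circlepath 0 r)"
    hence x: "x \<noteq> 0" using r by auto
    have "x ^ Suc m = x^a * x ^ Suc (m - a)" using True by (simp add: power_add[symmetric])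
    thus "K x / x ^ Suc (m - a) = K x * x ^ a / x ^ Suc m" using x by (simp add: field_simps)
  qed
next
  case False
  have "((\<lambda>w. K w * w ^ (a - Suc m)) has_contour_integral 0) (circlepath 0 r)"
    by (rule Cauchy_theorem_disc_simple[of _ 0 1]) (use holo r in \<open>auto intro!: holomorphic_intros\<close>)
  hence "((\<lambda>w. K w * w ^ (a - Suc m)) has_contour_integral
           (2 * pi * \<i> * (if a \<le> m then fps_expansion K 0 $ (m - a) else 0))) (circlepath 0 r)"
    using False by simp
  thus ?thesis
  proof (rule has_contour_integral_eq)
    fix x assume "x \<in> path_image (circlepath 0 r)"
    hence x: "x \<noteq> 0" using r by auto
    have "a = (a - Suc m) + Suc m" using False by simp
    hence "x ^ a = x ^ (a - Suc m) * x ^ Suc m" by (metis power_add)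
    thus "K x * x ^ (a - Suc m) = K x * x ^ a / x ^ Suc m" using x by (simp add: field_simps)
  qed
qed

lemma toeplitz_r:
  fixes K :: "complex \<Rightarrow> complex" and r :: real and Psi :: "complex fps"
  assumes holo: "K holomorphic_on ball 0 1" and pos: "\<And>z. z \<in> ball 0 1 \<Longrightarrow> Im (K z) \<ge> 0"
    and r: "0 < r" "r < 1"
  shows "Im (\<Sum>a\<le>M. \<Sum>m\<le>M. Psi$a * cnj (Psi$m) * of_real (r^(2*m)) *
            (if a \<le> m then fps_expansion K 0 $ (m-a) else 0)) \<ge> 0"
proof -
  define P where "P w = (\<Sum>a\<le>M. Psi$a * w^a)" for w
  define c where "c a m = Psi$a * cnj (Psi$m) * of_real (r^(2*m))" for a m
  define V where "V = (\<Sum>a\<le>M. \<Sum>m\<le>M. c a m * (if a \<le> m then fps_expansion K 0 $ (m-a) else 0))"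
  define g where "g = circlepath 0 r"
  have I1: "((\<lambda>w. \<Sum>a\<le>M. \<Sum>m\<le>M. c a m * (K w * w^a / w^Suc m)) has_contour_integral
      (\<Sum>a\<le>M. \<Sum>m\<le>M. c a m * (2 * pi * \<i> * (if a \<le> m then fps_expansion K 0 $ (m - a) else 0)))) g"
    unfolding g_def by (intro has_contour_integral_sum has_contour_integral_lmul coef_integral[OF holo r]) auto
  have val: "(\<Sum>a\<le>M. \<Sum>m\<le>M. c a m * (2 * pi * \<i> * (if a \<le> m then fps_expansion K 0 $ (m - a) else 0)))
      = 2 * pi * \<i> * V"
    unfolding V_def by (simp add: sum_distrib_left mult_ac)
  have I2: "((\<lambda>w. K w * (P w * cnj (P w)) / w) has_contour_integral (2 * pi * \<i> * V)) g"
    using I1[unfolded val]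
  proof (rule has_contour_integral_eq)
    fix w assume "w \<in> path_image g"
    hence nw: "cmod w = r" using r unfolding g_def by (simp add: dist_norm)
    hence w0: "w \<noteq> 0" using r by auto
    have cw: "cnj w = of_real (r^2) / w"
    proof -
      have "w * cnj w = of_real ((cmod w)^2)" by (metis complex_norm_square)
      thus ?thesis using w0 nw by (simp add: field_simps)
    qed
    have cP: "cnj (P w) = (\<Sum>m\<le>M. cnj (Psi$m) * of_real (r^(2*m)) / w^m)"
      unfolding P_def cnj_sum by (simp add: cw power_divide power_mult[symmetric] of_real_power[symmetric] del: of_real_power)
    have e1: "P w * cnj (P w) = (\<Sum>a\<le>M. \<Sum>m\<le>M. Psi$a * w^a * (cnj (Psi$m) * of_real (r^(2*m)) / w^m))"
      unfolding cP by (simp only: P_def sum_product)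
    have "K w * (P w * cnj (P w)) / w = (\<Sum>a\<le>M. \<Sum>m\<le>M. K w * (Psi$a * w^a * (cnj (Psi$m) * of_real (r^(2*m)) / w^m)) / w)"
      unfolding e1 by (simp add: sum_distrib_left sum_divide_distrib)
    also have "\<dots> = (\<Sum>a\<le>M. \<Sum>m\<le>M. c a m * (K w * w^a / w^Suc m))"
      by (intro sum.cong refl) (simp add: c_def field_simps w0)
    finally have "K w * (P w * cnj (P w)) / w = (\<Sum>a\<le>M. \<Sum>m\<le>M. c a m * (K w * w^a / w^Suc m))" .
    thus "(\<Sum>a\<le>M. \<Sum>m\<le>M. c a m * (K w * w^a / w^Suc m)) = K w * (P w * cnj (P w)) / w" by (rule sym)
  qed
  define h where "h t = K (g t) * (P (g t) * cnj (P (g t)))" for t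
  have gt: "g t = of_real r * exp (2 * of_real pi * \<i> * of_real t)" for t
    unfolding g_def circlepath by simp
  have gt0: "g t \<noteq> 0" for t unfolding gt using r by simp
  have ng: "cmod (g t) = r" for t unfolding gt using r by (simp add: norm_mult)
  have "((\<lambda>t. K (g t) * (P (g t) * cnj (P (g t))) / g t * vector_derivative g (at t within {0..1}))
          has_integral (2 * pi * \<i> * V)) {0..1}"
    using I2 unfolding has_contour_integral_def .
  hence "((\<lambda>t. (2 * pi * \<i>) * h t) has_integral (2 * pi * \<i> * V)) {0..1}"
  proof (rule has_integral_eq[rotated])
    fix t :: real assume t: "t \<in> {0..1}"
    have "vector_derivative g (at t within {0..1}) = 2 * pi * \<i> * g t"
    proof -
      have "vector_derivative (circlepath 0 r) (at t within {0..1}) = 2 * pi * \<i> * r * exp(2 * of_real pi * \<i> * t)"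
        using t by (intro vector_derivative_circlepath01) auto
      hence "vector_derivative g (at t within {0..1}) = 2 * pi * \<i> * (r * exp(2 * of_real pi * \<i> * t))"
        unfolding g_def by (simp add: mult.assoc)
      thus ?thesis by (simp only: gt[symmetric])
    qed
    thus "K (g t) * (P (g t) * cnj (P (g t))) / g t * vector_derivative g (at t within {0..1}) = (2 * pi * \<i>) * h t"
      using gt0[of t] unfolding h_def by (simp add: field_simps)
  qed
  hence "(h has_integral V) {0..1}"
    by (subst (asm) has_integral_mult_right_iff) auto
  hence hi: "((\<lambda>t. Im (h t)) has_integral Im V) {0..1}" by (rule has_integral_Im)
  have "0 \<le> Im V"
  proof (rule has_integral_nonneg[OF hi])
    fix t :: real
    have "P (g t) * cnj (P (g t)) = of_real ((cmod (P (g t)))^2)" by (metis complex_norm_square)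
    moreover have "Im (K (g t)) \<ge> 0" using pos[of "g t"] ng[of t] r by simp
    ultimately show "0 \<le> Im (h t)" unfolding h_def by simp
  qed
  thus ?thesis unfolding V_def c_def .
qed

lemma toeplitz:
  fixes K :: "complex \<Rightarrow> complex" and Psi :: "complex fps"
  assumes holo: "K holomorphic_on ball 0 1" and pos: "\<And>z. z \<in> ball 0 1 \<Longrightarrow> Im (K z) \<ge> 0"
  shows "Im (\<Sum>m\<le>M. (fps_expansion K 0 * Psi) $ m * cnj (Psi $ m)) \<ge> 0"
proof -
  define f where "f r = Im (\<Sum>a\<le>M. \<Sum>m\<le>M. Psi$a * cnj (Psi$m) * of_real (r^(2*m)) *
            (if a \<le> m then fps_expansion K 0 $ (m-a) else 0))" for r :: real
  have lim: "(f \<longlongrightarrow> f 1) (at_left 1)" unfolding f_def by (intro tendsto_intros)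
  have ev: "eventually (\<lambda>r. 0 \<le> f r) (at_left (1::real))"
  proof (rule eventually_mono[OF eventually_at_left_real[of 0 1]])
    fix r :: real assume "r \<in> {0<..<1}"
    thus "0 \<le> f r" unfolding f_def by (intro toeplitz_r[OF holo pos]) auto
  qed simp
  have f1: "0 \<le> f 1" by (rule tendsto_lowerbound[OF lim ev]) simp
  have "(\<Sum>a\<le>M. \<Sum>m\<le>M. Psi$a * cnj (Psi$m) * of_real (1^(2*m)) *
            (if a \<le> m then fps_expansion K 0 $ (m-a) else 0))
     = (\<Sum>m\<le>M. \<Sum>a\<le>M. cnj (Psi$m) * (if a \<le> m then Psi$a * fps_expansion K 0 $ (m-a) else 0))"
    by (subst sum.swap) (intro sum.cong refl, simp add: mult_ac)
  also have "\<dots> = (\<Sum>m\<le>M. (fps_expansion K 0 * Psi) $ m * cnj (Psi $ m))"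
  proof (intro sum.cong refl)
    fix m assume m: "m \<in> {..M}"
    have "(\<Sum>a\<le>M. cnj (Psi$m) * (if a \<le> m then Psi$a * fps_expansion K 0 $ (m-a) else 0))
        = cnj (Psi$m) * (\<Sum>a\<le>M. (if a \<le> m then Psi$a * fps_expansion K 0 $ (m-a) else 0))"
      by (simp add: sum_distrib_left)
    also have "(\<Sum>a\<le>M. (if a \<le> m then Psi$a * fps_expansion K 0 $ (m-a) else 0))
        = (\<Sum>a\<in>{a\<in>{..M}. a \<le> m}. Psi$a * fps_expansion K 0 $ (m-a))"
      by (rule sum.inter_filter[symmetric]) simp
    also have "{a\<in>{..M}. a \<le> m} = {0..m}" using m by auto
    also have "(\<Sum>a\<in>{0..m}. Psi$a * fps_expansion K 0 $ (m-a)) = (Psi * fps_expansion K 0) $ m"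
      by (simp add: fps_mult_nth)
    finally show "(\<Sum>a\<le>M. cnj (Psi$m) * (if a \<le> m then Psi$a * fps_expansion K 0 $ (m-a) else 0))
        = (fps_expansion K 0 * Psi) $ m * cnj (Psi $ m)" by (simp add: mult.commute)
  qed
  finally show ?thesis using f1 unfolding f_def by simp
qed


lemma oneD:
  fixes hb ch tau h1 W :: real and phi :: "nat \<Rightarrow> complex"
  assumes hb: "hb > 0" and ch: "ch > 0" and tau: "tau > 0" and h1: "h1 > 0" and phi0: "phi 0 = 0"
  shows "Im (\<Sum>m=1..M. (\<Sum>p=0..m. Rseq hb ch tau h1 W p * phi (m - p)) * cnj (phi (m - 1) + phi m)) \<ge> 0"
proof -
  obtain G where holo: "G holomorphic_on ball 0 1"
    and Gd: "\<And>d. (deriv ^^ d) G 0 / fact d = Rseq hb ch tau h1 W d"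
    and Gpos: "\<And>z. z \<in> ball 0 1 \<Longrightarrow> Im (G z / (1 + z)) > 0"
    using R_analytic[OF hb ch tau h1] by blast
  define K where "K z = G z / (1 + z)" for z
  have nz1: "1 + z \<noteq> 0" if "z \<in> ball 0 1" for z :: complex
  proof
    assume "1 + z = 0" hence "z = -1" by (simp add: add_eq_0_iff)
    thus False using that by simp
  qed
  have holoK: "K holomorphic_on ball 0 1" unfolding K_def using holo nz1 by (intro holomorphic_intros) auto
  have posK: "Im (K z) \<ge> 0" if "z \<in> ball 0 1" for z using Gpos[OF that] unfolding K_def by simp
  define FR where "FR = fps_expansion G 0"
  define FK where "FK = fps_expansion K 0"
  have FRn: "FR $ d = Rseq hb ch tau h1 W d" for d unfolding FR_def fps_expansion_def using Gd by simp
  have holo': "G holomorphic_on eball 0 1" using holo by (simp add: one_ereal_def)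
  have holoK': "K holomorphic_on eball 0 1" using holoK by (simp add: one_ereal_def)
  have radR: "fps_conv_radius FR \<ge> 1" unfolding FR_def using conv_radius_fps_expansion[OF holo'] .
  have radK: "fps_conv_radius FK \<ge> 1" unfolding FK_def using conv_radius_fps_expansion[OF holoK'] .
  have evR: "eval_fps FR z = G z" if "norm z < 1" for z
    unfolding FR_def using eval_fps_expansion'[OF holo', of z] that by (simp add: one_ereal_def)
  have evK: "eval_fps FK z = K z" if "norm z < 1" for z
    unfolding FK_def using eval_fps_expansion'[OF holoK', of z] that by (simp add: one_ereal_def)
  have rad1X: "fps_conv_radius (1 + fps_X :: complex fps) = \<infinity>"
    using fps_conv_radius_add[of "1::complex fps" fps_X] by simp
  have rel: "FR = (1 + fps_X) * FK"
  proof (rule eval_fps_eqD)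
    show "fps_conv_radius FR > 0" using radR less_le_trans[of "0::ereal" 1] by simp
    have "1 \<le> fps_conv_radius ((1 + fps_X) * FK)"
      using fps_conv_radius_mult[of "1 + fps_X" FK] radK rad1X by simp
    thus "fps_conv_radius ((1 + fps_X) * FK) > 0" using less_le_trans[of "0::ereal" 1] by simp
    have "eventually (\<lambda>z. z \<in> ball 0 1) (nhds (0::complex))" by (intro eventually_nhds_in_open) auto
    thus "eventually (\<lambda>z. eval_fps FR z = eval_fps ((1 + fps_X) * FK) z) (nhds 0)"
    proof eventually_elim
      case (elim z)
      have n1: "norm z < 1" using elim by simp
      have "ereal (norm z) < 1" using n1 by (simp add: one_ereal_def)
      hence nK: "ereal (norm z) < fps_conv_radius FK" using radK by (rule less_le_trans)
      have "eval_fps ((1 + fps_X) * FK) z = eval_fps (1 + fps_X) z * eval_fps FK z"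
        by (rule eval_fps_mult) (use rad1X nK in auto)
      also have "eval_fps (1 + fps_X) z = 1 + z"
        by (subst eval_fps_add) auto
      finally show ?case using evR[OF n1] evK[OF n1] nz1[OF elim] unfolding K_def by simp
    qed
  qed
  define Phi where "Phi = Abs_fps phi"
  define Psi where "Psi = (1 + fps_X) * Phi"
  have Psin: "Psi $ m = phi m + (if m = 0 then 0 else phi (m - 1))" for m
    unfolding Psi_def Phi_def by (simp add: distrib_right)
  have conv: "(FR * Phi) $ m = (\<Sum>p=0..m. Rseq hb ch tau h1 W p * phi (m - p))" for m
    unfolding Phi_def by (simp add: fps_mult_nth FRn)
  have FRP: "FR * Phi = FK * Psi" unfolding rel Psi_def by (simp add: mult_ac)
  have "(\<Sum>m=1..M. (\<Sum>p=0..m. Rseq hb ch tau h1 W p * phi (m - p)) * cnj (phi (m - 1) + phi m))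
      = (\<Sum>m=1..M. (FK * Psi) $ m * cnj (Psi $ m))"
    by (intro sum.cong refl) (simp add: conv[symmetric] FRP Psin add.commute)
  also have "\<dots> = (\<Sum>m\<le>M. (FK * Psi) $ m * cnj (Psi $ m))"
  proof -
    have "{..M} = insert 0 {1..M}" by auto
    moreover have "Psi $ 0 = 0" using phi0 by (simp add: Psin)
    ultimately show ?thesis by simp
  qed
  finally show ?thesis using toeplitz[OF holoK posK, where Psi=Psi and M=M] unfolding FK_def by simp
qed


lemma grid_upd: "j \<in> grid n J \<Longrightarrow> k \<in> {2..n} \<Longrightarrow> t \<in> {1..<J k} \<Longrightarrow> j(k := t) \<in> grid n J"
  unfolding grid_def by (auto simp: PiE_iff extensional_def)

lemma grid_mem: "j \<in> grid n J \<Longrightarrow> k \<in> {2..n} \<Longrightarrow> j k \<in> {1..<J k}"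
  unfolding grid_def by (auto simp: PiE_iff)

lemma finite_grid: "finite (grid n J)"
  unfolding grid_def by (intro finite_PiE) auto

lemma dst_lin: "dst J k (\<lambda>j. c * U j + d * V j) = (\<lambda>q. c * dst J k U q + d * dst J k V q)"
  unfolding dst_def by (auto simp: sum.distrib sum_distrib_left algebra_simps)

lemma foldl_dst_lin:
  "foldl (\<lambda>Q k. dst J k Q) (\<lambda>j. c * U j + d * V j) ks
     = (\<lambda>q. c * foldl (\<lambda>Q k. dst J k Q) U ks q + d * foldl (\<lambda>Q k. dst J k Q) V ks q)"
proof (induction ks arbitrary: U V)
  case Nil thus ?case by simp
next
  case (Cons k ks)
  show ?case by (simp add: dst_lin Cons.IH)
qed

lemma dst_all_lin: "dst_all n J (\<lambda>j. c * U j + d * V j) q = c * dst_all n J U q + d * dst_all n J V q"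
  unfolding dst_all_def foldl_dst_lin by simp

lemma foldl_dst_zero:
  assumes "set ks \<subseteq> {2..n}" "\<forall>j\<in>grid n J. U j = 0" "q \<in> grid n J"
  shows "foldl (\<lambda>Q k. dst J k Q) U ks q = 0"
  using assms
proof (induction ks arbitrary: U)
  case Nil thus ?case by simp
next
  case (Cons k ks)
  have "\<forall>j\<in>grid n J. dst J k U j = 0"
    using Cons.prems grid_upd unfolding dst_def by (auto intro!: sum.neutral)
  thus ?case using Cons by simp
qed

lemma dst_all_zero: "\<forall>j\<in>grid n J. U j = 0 \<Longrightarrow> q \<in> grid n J \<Longrightarrow> dst_all n J U q = 0"
  unfolding dst_all_def by (rule foldl_dst_zero) auto

lemma adj_single:
  assumes k: "k \<in> {2..n}" and Jk: "J k > 0"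
  shows "(\<Sum>j\<in>grid n J. idst J k Y j * cnj (B j))
       = of_real (real (J k) / 2) * (\<Sum>q\<in>grid n J. Y q * cnj (dst J k B q))"
proof -
  define I where "I = {1..<J k}"
  define s where "s x t = complex_of_real (sin (pi * real x * real t / real (J k)))" for x t :: nat
  define S where "S = grid n J \<times> I"
  define sg where "sg = (\<lambda>(x::nat\<Rightarrow>nat, t::nat). (x(k := t), x k))"
  have fS: "finite S" unfolding S_def I_def by (simp add: finite_grid)
  have "(\<Sum>j\<in>grid n J. idst J k Y j * cnj (B j))
      = (\<Sum>j\<in>grid n J. \<Sum>t\<in>I. Y (j(k := t)) * s t (j k) * cnj (B j))"
    unfolding idst_def I_def s_def by (simp add: sum_distrib_right)
  also have "\<dots> = (\<Sum>(j, t)\<in>S. Y (j(k := t)) * s t (j k) * cnj (B j))"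
    unfolding S_def by (rule sum.cartesian_product)
  also have "\<dots> = (\<Sum>(q, t)\<in>S. Y q * s (q k) t * cnj (B (q(k := t))))"
  proof (rule sum.reindex_bij_witness[of _ sg sg])
    fix a assume "a \<in> S" thus "sg (sg a) = a" unfolding sg_def by (cases a) auto
  next
    fix a assume a: "a \<in> S"
    obtain x t where xt: "a = (x, t)" by (cases a)
    have x: "x \<in> grid n J" and t: "t \<in> {1..<J k}" using a xt unfolding S_def I_def by auto
    show "sg a \<in> S" unfolding sg_def S_def I_def xt using grid_upd[OF x k t] grid_mem[OF x k] by simp
  next
    fix a assume "a \<in> S" thus "sg (sg a) = a" unfolding sg_def by (cases a) auto
  next
    fix a assume a: "a \<in> S"
    obtain x t where xt: "a = (x, t)" by (cases a)
    have x: "x \<in> grid n J" and t: "t \<in> {1..<J k}" using a xt unfolding S_def I_def by auto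
    show "sg a \<in> S" unfolding sg_def S_def I_def xt using grid_upd[OF x k t] grid_mem[OF x k] by simp
  next
    fix a assume "a \<in> S"
    thus "(case sg a of (q, t) \<Rightarrow> Y q * s (q k) t * cnj (B (q(k := t)))) =
          (case a of (j, t) \<Rightarrow> Y (j(k := t)) * s t (j k) * cnj (B j))"
      unfolding sg_def by (cases a) auto
  qed
  also have "\<dots> = (\<Sum>q\<in>grid n J. \<Sum>t\<in>I. Y q * s (q k) t * cnj (B (q(k := t))))"
    unfolding S_def by (rule sum.cartesian_product[symmetric])
  also have "\<dots> = of_real (real (J k) / 2) * (\<Sum>q\<in>grid n J. Y q * cnj (dst J k B q))"
    unfolding dst_def I_def s_def using Jk
    by (simp add: sum_distrib_left sum_distrib_right cnj_sum mult_ac)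
  finally show ?thesis .
qed

lemma adj_fold:
  assumes "set ks \<subseteq> {2..n}" "\<forall>k\<in>set ks. J k > 0"
  shows "(\<Sum>j\<in>grid n J. foldr (\<lambda>k Q. idst J k Q) ks Y j * cnj (B j))
       = of_real (\<Prod>k\<leftarrow>ks. real (J k) / 2) * (\<Sum>q\<in>grid n J. Y q * cnj (foldl (\<lambda>Q k. dst J k Q) B ks q))"
  using assms
proof (induction ks arbitrary: B)
  case Nil thus ?case by simp
next
  case (Cons k ks)
  have k: "k \<in> {2..n}" "J k > 0" using Cons.prems by auto
  have "(\<Sum>j\<in>grid n J. foldr (\<lambda>k Q. idst J k Q) (k # ks) Y j * cnj (B j))
      = (\<Sum>j\<in>grid n J. idst J k (foldr (\<lambda>k Q. idst J k Q) ks Y) j * cnj (B j))" by simp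
  also have "\<dots> = of_real (real (J k) / 2) * (\<Sum>q\<in>grid n J. foldr (\<lambda>k Q. idst J k Q) ks Y q * cnj (dst J k B q))"
    by (rule adj_single[of k n J, OF k])
  also have "(\<Sum>q\<in>grid n J. foldr (\<lambda>k Q. idst J k Q) ks Y q * cnj (dst J k B q))
      = of_real (\<Prod>k\<leftarrow>ks. real (J k) / 2) * (\<Sum>q\<in>grid n J. Y q * cnj (foldl (\<lambda>Q k. dst J k Q) (dst J k B) ks q))"
    using Cons.IH Cons.prems by simp
  finally show ?case by simp
qed

lemma adj_all:
  assumes "\<forall>k\<in>{2..n}. J k > 0"
  shows "(\<Sum>j\<in>grid n J. idst_all n J Y j * cnj (B j))
       = of_real (\<Prod>k\<leftarrow>[2..<Suc n]. real (J k) / 2) * (\<Sum>q\<in>grid n J. Y q * cnj (dst_all n J B q))"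
  unfolding idst_all_def dst_all_def using assms by (intro adj_fold) auto


theorem lemma4p1:
  fixes n :: nat and hbar ch V tau :: real and X :: "nat \<Rightarrow> real" and J :: "nat \<Rightarrow> nat"
    and Phi :: "nat \<Rightarrow> (nat \<Rightarrow> nat) \<Rightarrow> complex" and M :: nat
  assumes "n \<ge> 2" and "hbar > 0" and "ch > 0" and "tau > 0"
    and "\<forall>k\<in>{1..n}. X k > 0" and "\<forall>k\<in>{1..n}. J k \<ge> 2"
    and "\<forall>j\<in>grid n J. Phi 0 j = 0"
    and "M \<ge> 1"
  shows "Im (\<Sum>m=1..M. inner_grid n X J (Sref n hbar ch V tau X J Phi m)
                 (\<lambda>j. (Phi (m - 1) j + Phi m j) / 2) * complex_of_real tau) \<ge> 0"
proof -
  note hyp = assms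
  define hh where "hh = (\<Prod>k=2..n. X k / real (J k))"
  define C where "C = (\<Prod>k\<leftarrow>[2..<Suc n]. real (J k) / 2)"
  define h1 where "h1 = X 1 / real (J 1)"
  define sg where "sg q = (\<Prod>k=2..n. sig X J k (q k))" for q :: "nat \<Rightarrow> nat"
  define R where "R q p = Rseq hbar ch tau h1 (Vq n V ch X J q) p" for q p
  define ph where "ph q m = dst_all n J (Phi m) q" for q m
  define Z where "Z q = (\<Sum>m=1..M. (\<Sum>p=0..m. R q p * ph q (m - p)) * cnj (ph q (m - 1) + ph q m))" for q
  have k1: "k \<in> {1..n}" if "k \<in> {2..n}" for k using that by simp
  have Jpos: "\<forall>k\<in>{2..n}. J k > 0"
  proof
    fix k assume "k \<in> {2..n}"
    hence "J k \<ge> 2" using hyp(6) k1 by blast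
    thus "J k > 0" by simp
  qed
  have hh: "hh > 0" unfolding hh_def
  proof (intro prod_pos ballI)
    fix k assume k: "k \<in> {2..n}"
    hence "X k > 0" using hyp(5) k1 by blast
    moreover have "J k > 0" using Jpos k by blast
    ultimately show "X k / real (J k) > 0" by simp
  qed
  have C: "C > 0"
  proof -
    have "C = (\<Prod>k\<in>set [2..<Suc n]. real (J k) / 2)" unfolding C_def
      by (rule prod.distinct_set_conv_list[symmetric]) simp
    also have "\<dots> > 0" using Jpos by (intro prod_pos) auto
    finally show ?thesis .
  qed
  have sgnn: "sg q \<ge> 0" for q
    unfolding sg_def
  proof (intro prod_nonneg ballI)
    fix k assume "k \<in> {2..n}"
    have "(sin (pi * real (q k) * (X k / real (J k)) / (2 * X k)))^2 \<le> 1"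
      using abs_sin_le_one abs_square_le_1 by blast
    thus "0 \<le> sig X J k (q k)" unfolding sig_def Let_def by simp
  qed
  have h1: "h1 > 0"
  proof -
    have "1 \<in> {1..n}" using hyp(1) by simp
    hence "X 1 > 0" "J 1 \<ge> 2" using hyp(5,6) by auto
    thus ?thesis unfolding h1_def by simp
  qed
  have ImZ: "Im (Z q) \<ge> 0" if q: "q \<in> grid n J" for q
  proof -
    have "ph q 0 = 0" unfolding ph_def by (rule dst_all_zero[OF hyp(7) q])
    thus ?thesis unfolding Z_def R_def by (rule oneD[OF hyp(2) hyp(3) hyp(4) h1])
  qed
  define T where "T q m = (\<Sum>p=0..m. R q p * ph q (m - p)) * cnj (ph q (m - 1) + ph q m)" for q m
  have step: "inner_grid n X J (Sref n hbar ch V tau X J Phi m) (\<lambda>j. (Phi (m - 1) j + Phi m j) / 2) * of_real tau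
     = of_real (hh * C * tau / 2) * (\<Sum>q\<in>grid n J. of_real (sg q) * T q m)" for m
  proof -
    define A where "A q = of_real (sg q) * (\<Sum>p=0..m. R q p * ph q (m - p))" for q
    define Psi where "Psi j = (Phi (m - 1) j + Phi m j) / 2" for j
    have Psi': "Psi = (\<lambda>j. (1/2) * Phi (m - 1) j + (1/2) * Phi m j)" unfolding Psi_def by (auto simp: field_simps)
    have dP: "dst_all n J Psi q = (ph q (m - 1) + ph q m) / 2" for q
      unfolding Psi' dst_all_lin ph_def by (simp add: field_simps)
    have Sr: "Sref n hbar ch V tau X J Phi m = idst_all n J A"
      unfolding Sref_def A_def sg_def R_def h1_def ph_def ..
    have "inner_grid n X J (Sref n hbar ch V tau X J Phi m) Psi
        = (\<Sum>j\<in>grid n J. idst_all n J A j * cnj (Psi j)) * of_real hh"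
      unfolding inner_grid_def Sr hh_def by (simp add: sum_distrib_right)
    also have "\<dots> = of_real C * (\<Sum>q\<in>grid n J. A q * cnj (dst_all n J Psi q)) * of_real hh"
      unfolding adj_all[OF Jpos] C_def ..
    finally have "inner_grid n X J (Sref n hbar ch V tau X J Phi m) Psi * of_real tau
        = of_real C * (\<Sum>q\<in>grid n J. A q * cnj (dst_all n J Psi q)) * of_real hh * of_real tau" by simp
    also have "\<dots> = of_real (hh * C * tau / 2) * (\<Sum>q\<in>grid n J. of_real (sg q) * T q m)"
      unfolding dP A_def T_def by (simp add: sum_distrib_left mult_ac)
    finally show ?thesis unfolding Psi_def .
  qed
  define c where "c = hh * C * tau / 2"
  have c: "c > 0" unfolding c_def using hh C hyp(4) by simp
  have "(\<Sum>m=1..M. inner_grid n X J (Sref n hbar ch V tau X J Phi m)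
                 (\<lambda>j. (Phi (m - 1) j + Phi m j) / 2) * complex_of_real tau)
      = (\<Sum>m=1..M. of_real c * (\<Sum>q\<in>grid n J. of_real (sg q) * T q m))"
    unfolding c_def by (intro sum.cong refl step)
  also have "\<dots> = of_real c * (\<Sum>q\<in>grid n J. of_real (sg q) * Z q)"
    unfolding Z_def T_def[symmetric] by (simp add: sum_distrib_left) (rule sum.swap)
  finally have eq: "(\<Sum>m=1..M. inner_grid n X J (Sref n hbar ch V tau X J Phi m)
                 (\<lambda>j. (Phi (m - 1) j + Phi m j) / 2) * complex_of_real tau)
      = of_real c * (\<Sum>q\<in>grid n J. of_real (sg q) * Z q)" .
  have "Im (of_real c * (\<Sum>q\<in>grid n J. of_real (sg q) * Z q)) = c * (\<Sum>q\<in>grid n J. sg q * Im (Z q))"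
    by (simp add: Im_sum)
  also have "\<dots> \<ge> 0" using c sgnn ImZ by (intro mult_nonneg_nonneg sum_nonneg) auto
  finally show ?thesis unfolding eq by simp
qed


end
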